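(* Let $(X,\le)$ be a poset and $E$ an equivalence relation on $X$ with ${\le}\subseteq E$; let $\alpha:X\to X$ be an order automorphism and $\beta:X\to X$ a self-inverse dual order automorphism of $(X,\le)$ with $\alpha,\beta\subseteq E$ and $\beta=\alpha\circ\beta\circ\alpha$, and let $\mathbf A=\mathbf{Dq}(\mathbf E)=\langle\mathsf{Up}(\mathbf E),\cap,\cup,\circ,{\le},0,{\sim},-,'\rangle$ with $0=\alpha\circ({\le}^c)^\smile$ and $R'=\alpha\circ\beta\circ R^c\circ\beta$. Let $n\in\omega$, and for $R\in\mathsf{Up}(\mathbf E)$ let $R^{\triangledown n}={\sim}^{2n}(R')$ and $R^{\vartriangle n}=-^{2n}(R')$. Then there are self-inverse dual order automorphisms $\beta_{\triangledown n}$ and $\beta_{\vartriangle n}$ of $(X,\le)$ such that (i) $\beta_{\triangledown n},\beta_{\vartriangle n}\subseteq E$; (ii) $\beta_{\triangledown n}=\alpha\circ\beta_{\triangledown n}\circ\alpha$ and $\beta_{\vartriangle n}=\alpha\circ\beta_{\vartriangle n}\circ\alpha$; (iii) for all $R\in\mathsf{Up}(\mathbf E)$, $R^{\triangledown n}=\alpha\circ\beta_{\triangledown n}\circ R^c\circ\beta_{\triangledown n}$ and $R^{\vartriangle n}=\alpha\circ\beta_{\vartriangle n}\circ R^c\circ\beta_{\vartriangle n}$.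
   Context: For binary relations: converse $R^\smile=\{(x,y)\mid(y,x)\in R\}$; composition $R\circ S=\{(x,y)\mid\exists z\,((x,z)\in R,(z,y)\in S)\}$. Functions are identified with their graphs. For a poset $(X,\le)$ and an equivalence relation $E\supseteq{\le}$, $E$ is partially ordered by $(u,v)\preceq(x,y)$ iff $x\le u$ and $v\le y$; $\mathbf E=(E,\preceq)$, $\mathsf{Up}(\mathbf E)$ its up-sets. For $R\subseteq E$, $R^c=E\setminus R$. On $\mathsf{Up}(\mathbf E)$: ${\sim}R=(R^\smile\circ 0^c)^c$ and $-R=(0^c\circ R^\smile)^c$; ${\sim}^k,-^k$ are $k$-fold applications. Order automorphism: bijection with $x\le y\iff\alpha(x)\le\alpha(y)$; dual order automorphism: bijection with $x\le y\iff\beta(y)\le\beta(x)$; self-inverse: $\beta\circ\beta=\mathrm{id}_X$. *)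

theory Defs
  imports Main
begin

text \<open>Graph of a function on the carrier X (functions are identified with their graphs).
  Composition R \<circ> S of the paper is Isabelle's relational composition R O S,
  converse is r\<inverse>.\<close>
definition graph_on :: "'a set \<Rightarrow> ('a \<Rightarrow> 'a) \<Rightarrow> 'a rel" where
  "graph_on X f = {(x, f x) | x. x \<in> X}"

definition poset_on :: "'a set \<Rightarrow> 'a rel \<Rightarrow> bool" where
  "poset_on X le \<longleftrightarrow> le \<subseteq> X \<times> X \<and> refl_on X le \<and> antisym le \<and> trans le"

definition order_automorphism :: "'a set \<Rightarrow> 'a rel \<Rightarrow> ('a \<Rightarrow> 'a) \<Rightarrow> bool" where
  "order_automorphism X le a \<longleftrightarrow> bij_betw a X X \<and>
     (\<forall>x\<in>X. \<forall>y\<in>X. (x, y) \<in> le \<longleftrightarrow> (a x, a y) \<in> le)"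

definition dual_order_automorphism :: "'a set \<Rightarrow> 'a rel \<Rightarrow> ('a \<Rightarrow> 'a) \<Rightarrow> bool" where
  "dual_order_automorphism X le b \<longleftrightarrow> bij_betw b X X \<and>
     (\<forall>x\<in>X. \<forall>y\<in>X. (x, y) \<in> le \<longleftrightarrow> (b y, b x) \<in> le)"

definition self_inverse :: "'a set \<Rightarrow> ('a \<Rightarrow> 'a) \<Rightarrow> bool" where
  "self_inverse X b \<longleftrightarrow> graph_on X b O graph_on X b = Id_on X"

text \<open>Up-sets of (E, \<preceq>) where (u,v) \<preceq> (x,y) iff x \<le> u and v \<le> y.\<close>
definition Up :: "'a rel \<Rightarrow> 'a rel \<Rightarrow> 'a rel set" where
  "Up le E = {R. R \<subseteq> E \<and> (\<forall>u v x y. (u, v) \<in> R \<and> (x, y) \<in> E \<and> (x, u) \<in> le \<and> (v, y) \<in> le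
                  \<longrightarrow> (x, y) \<in> R)}"

definition compl_E :: "'a rel \<Rightarrow> 'a rel \<Rightarrow> 'a rel" where
  "compl_E E R = E - R"

definition zero_rel :: "'a set \<Rightarrow> 'a rel \<Rightarrow> 'a rel \<Rightarrow> ('a \<Rightarrow> 'a) \<Rightarrow> 'a rel" where
  "zero_rel X le E a = graph_on X a O (compl_E E le)\<inverse>"

definition tneg :: "'a set \<Rightarrow> 'a rel \<Rightarrow> 'a rel \<Rightarrow> ('a \<Rightarrow> 'a) \<Rightarrow> 'a rel \<Rightarrow> 'a rel" where
  "tneg X le E a R = compl_E E (R\<inverse> O compl_E E (zero_rel X le E a))"

definition mneg :: "'a set \<Rightarrow> 'a rel \<Rightarrow> 'a rel \<Rightarrow> ('a \<Rightarrow> 'a) \<Rightarrow> 'a rel \<Rightarrow> 'a rel" where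
  "mneg X le E a R = compl_E E (compl_E E (zero_rel X le E a) O R\<inverse>)"

definition prime_op :: "'a set \<Rightarrow> 'a rel \<Rightarrow> ('a \<Rightarrow> 'a) \<Rightarrow> ('a \<Rightarrow> 'a) \<Rightarrow> 'a rel \<Rightarrow> 'a rel" where
  "prime_op X E a b R = graph_on X a O graph_on X b O compl_E E R O graph_on X b"

end

theory Submission
  imports Defs
begin


lemma mem_graph: "(x, y) \<in> graph_on X f \<longleftrightarrow> x \<in> X \<and> y = f x"
  unfolding graph_on_def by auto

locale dq =
  fixes X :: "'a set" and le E :: "'a rel" and \<alpha> \<beta> :: "'a \<Rightarrow> 'a"
  assumes poset: "poset_on X le"
    and equivE: "equiv X E"
    and leE: "le \<subseteq> E"
    and alpha: "order_automorphism X le \<alpha>"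
    and beta: "dual_order_automorphism X le \<beta>" "self_inverse X \<beta>"
    and alphaE: "graph_on X \<alpha> \<subseteq> E"
    and betaE: "graph_on X \<beta> \<subseteq> E"
    and beta_eq: "graph_on X \<beta> = graph_on X \<alpha> O graph_on X \<beta> O graph_on X \<alpha>"
begin

definition ai where "ai = inv_into X \<alpha>"

lemma E_sub: "(x, y) \<in> E \<Longrightarrow> x \<in> X \<and> y \<in> X"
  using equivE unfolding equiv_def refl_on_def by auto
lemma Esym: "(x, y) \<in> E \<Longrightarrow> (y, x) \<in> E"
  using equivE unfolding equiv_def sym_def by auto
lemma Etrans: "(x, y) \<in> E \<Longrightarrow> (y, z) \<in> E \<Longrightarrow> (x, z) \<in> E"
  using equivE unfolding equiv_def trans_def by blast
lemma Erefl: "x \<in> X \<Longrightarrow> (x, x) \<in> E"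
  using equivE unfolding equiv_def refl_on_def by auto
lemma le_sub: "(x, y) \<in> le \<Longrightarrow> x \<in> X \<and> y \<in> X"
  using poset unfolding poset_on_def by auto
lemma le_refl: "x \<in> X \<Longrightarrow> (x, x) \<in> le"
  using poset unfolding poset_on_def refl_on_def by auto
lemma le_trans: "(x, y) \<in> le \<Longrightarrow> (y, z) \<in> le \<Longrightarrow> (x, z) \<in> le"
  using poset unfolding poset_on_def trans_def by blast

lemma a_in: "x \<in> X \<Longrightarrow> \<alpha> x \<in> X"
  using alpha unfolding order_automorphism_def bij_betw_def by auto
lemma ai_in: "x \<in> X \<Longrightarrow> ai x \<in> X"
  using alpha unfolding order_automorphism_def bij_betw_def ai_def
  by (metis inv_into_into)
lemma a_ai: "x \<in> X \<Longrightarrow> \<alpha> (ai x) = x"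
  using alpha unfolding order_automorphism_def bij_betw_def ai_def
  by (metis f_inv_into_f)
lemma ai_a: "x \<in> X \<Longrightarrow> ai (\<alpha> x) = x"
  using alpha unfolding order_automorphism_def bij_betw_def ai_def
  by (metis inv_into_f_f)
lemma aE: "x \<in> X \<Longrightarrow> (x, \<alpha> x) \<in> E"
  using alphaE by (auto simp: mem_graph)
lemma aiE: "x \<in> X \<Longrightarrow> (x, ai x) \<in> E"
  using aE[OF ai_in] a_ai Esym by metis
lemma a_le: "x \<in> X \<Longrightarrow> y \<in> X \<Longrightarrow> (x, y) \<in> le \<longleftrightarrow> (\<alpha> x, \<alpha> y) \<in> le"
  using alpha unfolding order_automorphism_def by auto
lemma ai_le: "x \<in> X \<Longrightarrow> y \<in> X \<Longrightarrow> (x, y) \<in> le \<longleftrightarrow> (ai x, ai y) \<in> le"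
  using a_le[OF ai_in ai_in] a_ai by metis
lemma b_in: "x \<in> X \<Longrightarrow> \<beta> x \<in> X"
  using beta unfolding dual_order_automorphism_def bij_betw_def by auto
lemma b_le: "x \<in> X \<Longrightarrow> y \<in> X \<Longrightarrow> (x, y) \<in> le \<longleftrightarrow> (\<beta> y, \<beta> x) \<in> le"
  using beta unfolding dual_order_automorphism_def by auto
lemma bE: "x \<in> X \<Longrightarrow> (x, \<beta> x) \<in> E"
  using betaE by (auto simp: mem_graph)
lemma bb: "x \<in> X \<Longrightarrow> \<beta> (\<beta> x) = x"
proof -
  assume x: "x \<in> X"
  have "(x, \<beta> (\<beta> x)) \<in> graph_on X \<beta> O graph_on X \<beta>"
    using x b_in by (auto simp: mem_graph)
  then show ?thesis using beta(2) unfolding self_inverse_def by auto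
qed
lemma b_aba: "x \<in> X \<Longrightarrow> \<beta> x = \<alpha> (\<beta> (\<alpha> x))"
proof -
  assume x: "x \<in> X"
  have "(x, \<beta> x) \<in> graph_on X \<alpha> O graph_on X \<beta> O graph_on X \<alpha>"
    using x beta_eq by (auto simp: mem_graph)
  then show ?thesis by (auto simp: mem_graph)
qed
lemma b_ai: "x \<in> X \<Longrightarrow> \<beta> (ai x) = \<alpha> (\<beta> x)"
  using b_aba[OF ai_in] a_ai by metis
lemma b_a: "x \<in> X \<Longrightarrow> \<beta> (\<alpha> x) = ai (\<beta> x)"
  using b_aba ai_a b_in a_in by metis

lemma pa_in: "x \<in> X \<Longrightarrow> (\<alpha> ^^ n) x \<in> X"
  by (induction n) (auto simp: a_in)
lemma pai_in: "x \<in> X \<Longrightarrow> (ai ^^ n) x \<in> X"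
  by (induction n) (auto simp: ai_in)
lemma paE: "x \<in> X \<Longrightarrow> (x, (\<alpha> ^^ n) x) \<in> E"
  by (induction n) (auto intro: Etrans aE pa_in Erefl)
lemma paiE: "x \<in> X \<Longrightarrow> (x, (ai ^^ n) x) \<in> E"
  by (induction n) (auto intro: Etrans aiE pai_in Erefl)
lemma pa_le: "x \<in> X \<Longrightarrow> y \<in> X \<Longrightarrow> (x, y) \<in> le \<longleftrightarrow> ((\<alpha> ^^ n) x, (\<alpha> ^^ n) y) \<in> le"
  by (induction n) (auto simp: a_le pa_in)
lemma pai_le: "x \<in> X \<Longrightarrow> y \<in> X \<Longrightarrow> (x, y) \<in> le \<longleftrightarrow> ((ai ^^ n) x, (ai ^^ n) y) \<in> le"
  by (induction n) (auto simp: ai_le pai_in)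
lemma a_pai: "x \<in> X \<Longrightarrow> (\<alpha> ^^ n) ((ai ^^ n) x) = x"
proof (induction n)
  case (Suc n)
  have "(\<alpha> ^^ Suc n) ((ai ^^ Suc n) x) = (\<alpha> ^^ n) (\<alpha> (ai ((ai ^^ n) x)))"
    by (metis funpow.simps(2) funpow_swap1 comp_def)
  also have "\<dots> = x" using Suc a_ai pai_in by simp
  finally show ?case .
qed auto
lemma ai_pa: "x \<in> X \<Longrightarrow> (ai ^^ n) ((\<alpha> ^^ n) x) = x"
proof (induction n)
  case (Suc n)
  have "(ai ^^ Suc n) ((\<alpha> ^^ Suc n) x) = (ai ^^ n) (ai (\<alpha> ((\<alpha> ^^ n) x)))"
    by (metis funpow.simps(2) funpow_swap1 comp_def)
  also have "\<dots> = x" using Suc ai_a pa_in by simp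
  finally show ?case .
qed auto
lemma b_pai: "x \<in> X \<Longrightarrow> \<beta> ((ai ^^ n) x) = (\<alpha> ^^ n) (\<beta> x)"
  by (induction n) (auto simp: b_ai pai_in)
lemma b_pa: "x \<in> X \<Longrightarrow> \<beta> ((\<alpha> ^^ n) x) = (ai ^^ n) (\<beta> x)"
  by (induction n) (auto simp: b_a pa_in)
lemma pai_comm: "x \<in> X \<Longrightarrow> (ai ^^ n) (\<alpha> x) = \<alpha> ((ai ^^ n) x)"
proof (induction n)
  case (Suc n)
  have "(ai ^^ Suc n) (\<alpha> x) = (ai ^^ n) x" using Suc ai_a pai_in by simp
  also have "\<dots> = \<alpha> ((ai ^^ Suc n) x)" using Suc a_ai pai_in by simp
  finally show ?case .
qed auto
lemma pa_comm: "(\<alpha> ^^ n) (\<alpha> x) = \<alpha> ((\<alpha> ^^ n) x)"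
  by (metis funpow_swap1)

end



context dq begin

definition conj :: "('a \<Rightarrow> 'a) \<Rightarrow> 'a rel \<Rightarrow> 'a rel" where
  "conj g R = {(x, y). (x, y) \<in> E \<and> (g x, g y) \<in> R}"

lemma UpD: "R \<in> Up le E \<Longrightarrow> (u, v) \<in> R \<Longrightarrow> (x, y) \<in> E \<Longrightarrow> (x, u) \<in> le \<Longrightarrow> (v, y) \<in> le \<Longrightarrow> (x, y) \<in> R"
  unfolding Up_def by blast
lemma UpE: "R \<in> Up le E \<Longrightarrow> (u, v) \<in> R \<Longrightarrow> (u, v) \<in> E"
  unfolding Up_def by blast

lemma E_shift: assumes "(a, b) \<in> E"
  shows "(ai a, ai b) \<in> E" "(ai b, a) \<in> E" "(\<alpha> a, \<alpha> b) \<in> E" "(b, \<alpha> a) \<in> E"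
proof -
  have X: "a \<in> X" "b \<in> X" using assms E_sub by auto
  show "(ai a, ai b) \<in> E" "(ai b, a) \<in> E" "(\<alpha> a, \<alpha> b) \<in> E" "(b, \<alpha> a) \<in> E"
    using X assms aE aiE by (meson Esym Etrans)+
qed

lemma conj_Up:
  assumes g: "\<And>x. x \<in> X \<Longrightarrow> g x \<in> X" "\<And>x. x \<in> X \<Longrightarrow> (x, g x) \<in> E"
    "\<And>x y. x \<in> X \<Longrightarrow> y \<in> X \<Longrightarrow> (x, y) \<in> le \<Longrightarrow> (g x, g y) \<in> le"
    and R: "R \<in> Up le E"
  shows "conj g R \<in> Up le E"
  unfolding Up_def conj_def
proof (safe)
  fix u v x y assume uv: "(u, v) \<in> E" "(g u, g v) \<in> R" and xy: "(x, y) \<in> E" "(x, u) \<in> le" "(v, y) \<in> le"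
  have "(g x, g y) \<in> E"
    using xy E_sub g(2) by (meson Esym Etrans)
  then show "(g x, g y) \<in> R"
    using UpD[OF R uv(2)] xy g(3) le_sub by blast
qed

lemma zc: "compl_E E (zero_rel X le E \<alpha>) = {(x, y). (x, y) \<in> E \<and> (y, \<alpha> x) \<in> le}"
proof -
  have "(x, y) \<in> graph_on X \<alpha> O (E - le)\<inverse> \<longleftrightarrow> (y, \<alpha> x) \<notin> le" if xy: "(x, y) \<in> E" for x y
  proof -
    have "x \<in> X" using xy E_sub by auto
    moreover have "(y, \<alpha> x) \<in> E" using xy aE \<open>x \<in> X\<close> by (meson Esym Etrans)
    ultimately show ?thesis by (auto simp: mem_graph)
  qed
  then show ?thesis unfolding compl_E_def zero_rel_def by auto
qed

definition Dt where "Dt R = {(x, y). (x, y) \<in> E \<and> (ai y, x) \<notin> R}"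
definition Dm where "Dm R = {(x, y). (x, y) \<in> E \<and> (y, \<alpha> x) \<notin> R}"

lemma tneg_eq: assumes R: "R \<in> Up le E" shows "tneg X le E \<alpha> R = Dt R"
proof -
  have "(\<exists>z. (z, x) \<in> R \<and> (z, y) \<in> E \<and> (y, \<alpha> z) \<in> le) \<longleftrightarrow> (ai y, x) \<in> R"
    if xy: "(x, y) \<in> E" for x y
  proof
    assume "\<exists>z. (z, x) \<in> R \<and> (z, y) \<in> E \<and> (y, \<alpha> z) \<in> le"
    then obtain z where z: "(z, x) \<in> R" "(z, y) \<in> E" "(y, \<alpha> z) \<in> le" by blast
    have zX: "z \<in> X" "y \<in> X" "x \<in> X" using z xy E_sub by auto
    have "(ai y, z) \<in> le" using z(3) ai_le[of y "\<alpha> z"] zX a_in ai_a by auto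
    moreover have "(ai y, x) \<in> E" using xy aiE zX by (meson Esym Etrans)
    ultimately show "(ai y, x) \<in> R" using UpD[OF R z(1)] le_refl zX by blast
  next
    assume "(ai y, x) \<in> R"
    moreover have "y \<in> X" using xy E_sub by auto
    ultimately show "\<exists>z. (z, x) \<in> R \<and> (z, y) \<in> E \<and> (y, \<alpha> z) \<in> le"
      by (intro exI[of _ "ai y"]) (auto simp: a_ai le_refl aiE Esym)
  qed
  then show ?thesis unfolding tneg_def zc unfolding Dt_def compl_E_def by auto
qed

lemma mneg_eq: assumes R: "R \<in> Up le E" shows "mneg X le E \<alpha> R = Dm R"
proof -
  have "(\<exists>z. (x, z) \<in> E \<and> (z, \<alpha> x) \<in> le \<and> (y, z) \<in> R) \<longleftrightarrow> (y, \<alpha> x) \<in> R"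
    if xy: "(x, y) \<in> E" for x y
  proof
    assume "\<exists>z. (x, z) \<in> E \<and> (z, \<alpha> x) \<in> le \<and> (y, z) \<in> R"
    then obtain z where z: "(x, z) \<in> E" "(z, \<alpha> x) \<in> le" "(y, z) \<in> R" by blast
    have zX: "z \<in> X" "y \<in> X" "x \<in> X" using z xy E_sub by auto
    have "(y, \<alpha> x) \<in> E" using xy aE zX by (meson Esym Etrans)
    then show "(y, \<alpha> x) \<in> R" using UpD[OF R z(3)] le_refl zX z(2) by blast
  next
    assume "(y, \<alpha> x) \<in> R"
    moreover have "x \<in> X" using xy E_sub by auto
    ultimately show "\<exists>z. (x, z) \<in> E \<and> (z, \<alpha> x) \<in> le \<and> (y, z) \<in> R"
      by (intro exI[of _ "\<alpha> x"]) (auto simp: le_refl aE a_in)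
  qed
  then show ?thesis unfolding mneg_def zc unfolding Dm_def compl_E_def by auto
qed

lemma Dt_Up: assumes R: "R \<in> Up le E" shows "Dt R \<in> Up le E"
  unfolding Up_def Dt_def
proof (safe)
  fix u v x y assume uv: "(u, v) \<in> E" "(ai v, u) \<notin> R" and xy: "(x, y) \<in> E" "(x, u) \<in> le" "(v, y) \<in> le"
    and c: "(ai y, x) \<in> R"
  have X: "u \<in> X" "v \<in> X" "x \<in> X" "y \<in> X" using uv xy E_sub by auto
  have "(ai v, u) \<in> E" using uv X aiE by (meson Esym Etrans)
  moreover have "(ai v, ai y) \<in> le" using xy X ai_le by auto
  ultimately have "(ai v, u) \<in> R" using UpD[OF R c] xy by blast
  then show False using uv by blast
qed

lemma Dm_Up: assumes R: "R \<in> Up le E" shows "Dm R \<in> Up le E"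
  unfolding Up_def Dm_def
proof (safe)
  fix u v x y assume uv: "(u, v) \<in> E" "(v, \<alpha> u) \<notin> R" and xy: "(x, y) \<in> E" "(x, u) \<in> le" "(v, y) \<in> le"
    and c: "(y, \<alpha> x) \<in> R"
  have X: "u \<in> X" "v \<in> X" "x \<in> X" "y \<in> X" using uv xy E_sub by auto
  have "(v, \<alpha> u) \<in> E" using uv X aE by (meson Esym Etrans)
  moreover have "(\<alpha> x, \<alpha> u) \<in> le" using xy X a_le by auto
  ultimately have "(v, \<alpha> u) \<in> R" using UpD[OF R c] xy by blast
  then show False using uv by blast
qed

lemma tneg2: assumes R: "R \<in> Up le E" shows "tneg X le E \<alpha> (tneg X le E \<alpha> R) = conj ai R"
proof -
  have "Dt (Dt R) = conj ai R"
    unfolding Dt_def conj_def using R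
    by (auto dest: UpE E_shift)
  then show ?thesis using tneg_eq Dt_Up R by simp
qed

lemma mneg2: assumes R: "R \<in> Up le E" shows "mneg X le E \<alpha> (mneg X le E \<alpha> R) = conj \<alpha> R"
proof -
  have "Dm (Dm R) = conj \<alpha> R"
    unfolding Dm_def conj_def using R
    by (auto dest: UpE E_shift)
  then show ?thesis using mneg_eq Dm_Up R by simp
qed

end



context dq begin

lemma conj_conj: assumes "\<And>x y. (x, y) \<in> E \<Longrightarrow> (g x, g y) \<in> E"
  shows "conj g (conj h R) = conj (\<lambda>x. h (g x)) R"
  unfolding conj_def using assms by auto

lemma pai_Up: "R \<in> Up le E \<Longrightarrow> conj (ai ^^ n) R \<in> Up le E"
  by (rule conj_Up) (auto simp: pai_in paiE pai_le[symmetric] le_sub)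
lemma pa_Up: "R \<in> Up le E \<Longrightarrow> conj (\<alpha> ^^ n) R \<in> Up le E"
  by (rule conj_Up) (auto simp: pa_in paE pa_le[symmetric] le_sub)

lemma conj_Id: "R \<in> Up le E \<Longrightarrow> conj (\<lambda>x. x) R = R"
  unfolding conj_def by (auto dest: UpE)

lemma tneg_pow: "R \<in> Up le E \<Longrightarrow> (tneg X le E \<alpha> ^^ (2 * n)) R = conj (ai ^^ n) R"
proof (induction n)
  case 0 then show ?case using conj_Id by simp
next
  case (Suc n)
  have "(tneg X le E \<alpha> ^^ (2 * Suc n)) R = tneg X le E \<alpha> (tneg X le E \<alpha> ((tneg X le E \<alpha> ^^ (2 * n)) R))"
    by simp
  also have "\<dots> = conj ai (conj (ai ^^ n) R)" using Suc tneg2 pai_Up by simp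
  also have "\<dots> = conj (\<lambda>x. (ai ^^ n) (ai x)) R" by (rule conj_conj) (auto dest: E_shift)
  also have "\<dots> = conj (ai ^^ Suc n) R" by (simp add: funpow_Suc_right comp_def del: funpow.simps(2))
  finally show ?case .
qed

lemma mneg_pow: "R \<in> Up le E \<Longrightarrow> (mneg X le E \<alpha> ^^ (2 * n)) R = conj (\<alpha> ^^ n) R"
proof (induction n)
  case 0 then show ?case using conj_Id by simp
next
  case (Suc n)
  have "(mneg X le E \<alpha> ^^ (2 * Suc n)) R = mneg X le E \<alpha> (mneg X le E \<alpha> ((mneg X le E \<alpha> ^^ (2 * n)) R))"
    by simp
  also have "\<dots> = conj \<alpha> (conj (\<alpha> ^^ n) R)" using Suc mneg2 pa_Up by simp
  also have "\<dots> = conj (\<lambda>x. (\<alpha> ^^ n) (\<alpha> x)) R" by (rule conj_conj) (auto dest: E_shift)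
  also have "\<dots> = conj (\<alpha> ^^ Suc n) R" by (simp add: funpow_Suc_right comp_def del: funpow.simps(2))
  finally show ?case .
qed

lemma graph_form:
  assumes f: "\<And>x. x \<in> X \<Longrightarrow> f x \<in> X" "\<And>x. x \<in> X \<Longrightarrow> f (f x) = x"
  shows "graph_on X \<alpha> O graph_on X f O compl_E E R O graph_on X f
     = {(x, y). x \<in> X \<and> y \<in> X \<and> (f (\<alpha> x), f y) \<in> E - R}"
proof -
  have "(x, y) \<in> graph_on X \<alpha> O graph_on X f O compl_E E R O graph_on X f \<longleftrightarrow>
        x \<in> X \<and> y \<in> X \<and> (f (\<alpha> x), f y) \<in> E - R" for x y
  proof (intro iffI)
    assume "(x, y) \<in> graph_on X \<alpha> O graph_on X f O compl_E E R O graph_on X f"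
    then obtain w where w: "x \<in> X" "(f (\<alpha> x), w) \<in> E - R" "w \<in> X" "y = f w"
      by (auto simp: mem_graph compl_E_def)
    then show "x \<in> X \<and> y \<in> X \<and> (f (\<alpha> x), f y) \<in> E - R" using f by auto
  next
    assume "x \<in> X \<and> y \<in> X \<and> (f (\<alpha> x), f y) \<in> E - R"
    then show "(x, y) \<in> graph_on X \<alpha> O graph_on X f O compl_E E R O graph_on X f"
      using f a_in by (auto simp: mem_graph compl_E_def intro!: relcompI)
  qed
  note eq = this
  show ?thesis
    apply (rule set_eqI)
    subgoal for p by (cases p) (simp only: eq mem_Collect_eq case_prod_conv)
    done
qed

lemma prime_form: "prime_op X E \<alpha> \<beta> R = {(x, y). x \<in> X \<and> y \<in> X \<and> (\<beta> (\<alpha> x), \<beta> y) \<in> E - R}"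
  unfolding prime_op_def using graph_form[of \<beta>] b_in bb by auto

lemma prime_Up: assumes R: "R \<in> Up le E" shows "prime_op X E \<alpha> \<beta> R \<in> Up le E"
  unfolding prime_form Up_def
proof (safe)
  fix x y assume "x \<in> X" "y \<in> X" "(\<beta> (\<alpha> x), \<beta> y) \<in> E"
  then show "(x, y) \<in> E" using aE bE a_in b_in by (meson Esym Etrans)
next
  fix u v x y assume uv: "u \<in> X" "v \<in> X" "(\<beta> (\<alpha> u), \<beta> v) \<in> E" "(\<beta> (\<alpha> u), \<beta> v) \<notin> R"
    and xy: "(x, y) \<in> E" "(x, u) \<in> le" "(v, y) \<in> le"
  have X: "x \<in> X" "y \<in> X" using xy E_sub by auto
  show "x \<in> X" "y \<in> X" by (fact X)+
  show E1: "(\<beta> (\<alpha> x), \<beta> y) \<in> E" using X xy(1) aE bE a_in b_in by (meson Esym Etrans)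
  assume c: "(\<beta> (\<alpha> x), \<beta> y) \<in> R"
  have "(\<alpha> x, \<alpha> u) \<in> le" using xy(2) uv X a_le by blast
  then have "(\<beta> (\<alpha> u), \<beta> (\<alpha> x)) \<in> le" using uv X a_in b_le by blast
  moreover have "(\<beta> y, \<beta> v) \<in> le" using xy uv X b_le by blast
  ultimately have "(\<beta> (\<alpha> u), \<beta> v) \<in> R" using UpD[OF R c uv(3)] by blast
  with uv show False by blast
qed

lemma good_inv:
  assumes f: "\<And>x. x \<in> X \<Longrightarrow> f x \<in> X" "\<And>x. x \<in> X \<Longrightarrow> f (f x) = x"
    "\<And>x. x \<in> X \<Longrightarrow> (x, f x) \<in> E"
    "\<And>x y. x \<in> X \<Longrightarrow> y \<in> X \<Longrightarrow> (x, y) \<in> le \<longleftrightarrow> (f y, f x) \<in> le"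
    "\<And>x. x \<in> X \<Longrightarrow> f x = \<alpha> (f (\<alpha> x))"
  shows "dual_order_automorphism X le f" "self_inverse X f" "graph_on X f \<subseteq> E"
    "graph_on X f = graph_on X \<alpha> O graph_on X f O graph_on X \<alpha>"
proof -
  show "dual_order_automorphism X le f"
    unfolding dual_order_automorphism_def
  proof (intro conjI)
    show "bij_betw f X X" using f(1,2) by (auto intro!: bij_betw_byWitness[where f' = f])
    show "\<forall>x\<in>X. \<forall>y\<in>X. ((x, y) \<in> le) = ((f y, f x) \<in> le)" using f(4) by blast
  qed
  show "self_inverse X f" unfolding self_inverse_def using f(1-3)
    by (auto simp: mem_graph intro!: relcompI)
  show "graph_on X f \<subseteq> E" using f(3) by (auto simp: mem_graph)
  have "(x, y) \<in> graph_on X f \<longleftrightarrow> (x, y) \<in> graph_on X \<alpha> O graph_on X f O graph_on X \<alpha>" for x y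
  proof
    assume "(x, y) \<in> graph_on X f"
    then have "x \<in> X" "y = \<alpha> (f (\<alpha> x))" using f(5) by (auto simp: mem_graph)
    then show "(x, y) \<in> graph_on X \<alpha> O graph_on X f O graph_on X \<alpha>"
      using a_in f(1) by (auto simp: mem_graph intro!: relcompI)
  next
    assume "(x, y) \<in> graph_on X \<alpha> O graph_on X f O graph_on X \<alpha>"
    then show "(x, y) \<in> graph_on X f" using f(5) by (auto simp: mem_graph)
  qed
  then show "graph_on X f = graph_on X \<alpha> O graph_on X f O graph_on X \<alpha>" by auto
qed

end



context dq begin

lemma final_eq:
  assumes g: "\<And>x. x \<in> X \<Longrightarrow> g x \<in> X" "\<And>x. x \<in> X \<Longrightarrow> (x, g x) \<in> E"
    "\<And>x. x \<in> X \<Longrightarrow> g (\<alpha> x) = \<alpha> (g x)"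
  shows "conj g (prime_op X E \<alpha> \<beta> R) = {(x, y). x \<in> X \<and> y \<in> X \<and> (\<beta> (g (\<alpha> x)), \<beta> (g y)) \<in> E - R}"
proof -
  have "(x, y) \<in> conj g (prime_op X E \<alpha> \<beta> R) \<longleftrightarrow> x \<in> X \<and> y \<in> X \<and> (\<beta> (g (\<alpha> x)), \<beta> (g y)) \<in> E - R"
    for x y
  proof
    assume "(x, y) \<in> conj g (prime_op X E \<alpha> \<beta> R)"
    then have "(x, y) \<in> E" "(\<beta> (\<alpha> (g x)), \<beta> (g y)) \<in> E - R"
      unfolding conj_def prime_form by auto
    then show "x \<in> X \<and> y \<in> X \<and> (\<beta> (g (\<alpha> x)), \<beta> (g y)) \<in> E - R"
      using E_sub g(3) by auto
  next
    assume h: "x \<in> X \<and> y \<in> X \<and> (\<beta> (g (\<alpha> x)), \<beta> (g y)) \<in> E - R"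
    then have X: "x \<in> X" "y \<in> X" by auto
    have h2: "(\<beta> (\<alpha> (g x)), \<beta> (g y)) \<in> E - R" using h g(3) by auto
    have e1: "(x, \<beta> (\<alpha> (g x))) \<in> E"
      using X g aE bE a_in b_in by (meson Etrans)
    have e2: "(y, \<beta> (g y)) \<in> E"
      using X g bE b_in by (meson Etrans)
    have "(x, y) \<in> E" using e1 e2 h2 by (meson DiffD1 Esym Etrans)
    then show "(x, y) \<in> conj g (prime_op X E \<alpha> \<beta> R)"
      unfolding conj_def prime_form using h2 X g by auto
  qed
  note eq = this
  show ?thesis
    apply (rule set_eqI)
    subgoal for p by (cases p) (simp only: eq mem_Collect_eq case_prod_conv)
    done
qed

end

theorem proposition3p20:
  fixes X :: "'a set" and le E :: "'a rel" and \<alpha> \<beta> :: "'a \<Rightarrow> 'a" and n :: nat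
  assumes poset: "poset_on X le"
    and equivE: "equiv X E"
    and leE: "le \<subseteq> E"
    and alpha: "order_automorphism X le \<alpha>"
    and beta: "dual_order_automorphism X le \<beta>" "self_inverse X \<beta>"
    and alphaE: "graph_on X \<alpha> \<subseteq> E"
    and betaE: "graph_on X \<beta> \<subseteq> E"
    and beta_eq: "graph_on X \<beta> = graph_on X \<alpha> O graph_on X \<beta> O graph_on X \<alpha>"
  shows "\<exists>\<beta>d \<beta>u :: 'a \<Rightarrow> 'a.
           dual_order_automorphism X le \<beta>d \<and> self_inverse X \<beta>d \<and>
           dual_order_automorphism X le \<beta>u \<and> self_inverse X \<beta>u \<and>
           graph_on X \<beta>d \<subseteq> E \<and> graph_on X \<beta>u \<subseteq> E \<and>
           graph_on X \<beta>d = graph_on X \<alpha> O graph_on X \<beta>d O graph_on X \<alpha> \<and>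
           graph_on X \<beta>u = graph_on X \<alpha> O graph_on X \<beta>u O graph_on X \<alpha> \<and>
           (\<forall>R \<in> Up le E.
              (tneg X le E \<alpha> ^^ (2 * n)) (prime_op X E \<alpha> \<beta> R)
                = graph_on X \<alpha> O graph_on X \<beta>d O compl_E E R O graph_on X \<beta>d \<and>
              (mneg X le E \<alpha> ^^ (2 * n)) (prime_op X E \<alpha> \<beta> R)
                = graph_on X \<alpha> O graph_on X \<beta>u O compl_E E R O graph_on X \<beta>u)"
  proof -
  interpret dq X le E \<alpha> \<beta>
    using assms by unfold_locales
  define bd where "bd = (\<lambda>x. \<beta> ((ai ^^ n) x))"
  define bu where "bu = (\<lambda>x. \<beta> ((\<alpha> ^^ n) x))"
  have bd1: "\<And>x. x \<in> X \<Longrightarrow> bd x \<in> X" unfolding bd_def using pai_in b_in by blast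
  have bd2: "\<And>x. x \<in> X \<Longrightarrow> bd (bd x) = x" unfolding bd_def
    using pai_in b_in b_pai bb a_pai by metis
  have bd3: "\<And>x. x \<in> X \<Longrightarrow> (x, bd x) \<in> E" unfolding bd_def
    using pai_in paiE bE by (meson Etrans)
  have bd4: "\<And>x y. x \<in> X \<Longrightarrow> y \<in> X \<Longrightarrow> (x, y) \<in> le \<longleftrightarrow> (bd y, bd x) \<in> le"
    unfolding bd_def using pai_in pai_le b_le by metis
  have bd5: "\<And>x. x \<in> X \<Longrightarrow> bd x = \<alpha> (bd (\<alpha> x))" unfolding bd_def
    using pai_in pai_comm b_aba by metis
  have bu1: "\<And>x. x \<in> X \<Longrightarrow> bu x \<in> X" unfolding bu_def using pa_in b_in by blast
  have bu2: "\<And>x. x \<in> X \<Longrightarrow> bu (bu x) = x" unfolding bu_def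
    using pa_in b_in b_pa bb ai_pa by metis
  have bu3: "\<And>x. x \<in> X \<Longrightarrow> (x, bu x) \<in> E" unfolding bu_def
    using pa_in paE bE by (meson Etrans)
  have bu4: "\<And>x y. x \<in> X \<Longrightarrow> y \<in> X \<Longrightarrow> (x, y) \<in> le \<longleftrightarrow> (bu y, bu x) \<in> le"
    unfolding bu_def using pa_in pa_le b_le by metis
  have bu5: "\<And>x. x \<in> X \<Longrightarrow> bu x = \<alpha> (bu (\<alpha> x))" unfolding bu_def
    using pa_in pa_comm b_aba by metis
  note gd = good_inv[OF bd1 bd2 bd3 bd4 bd5]
  note gu = good_inv[OF bu1 bu2 bu3 bu4 bu5]
  have main: "(tneg X le E \<alpha> ^^ (2 * n)) (prime_op X E \<alpha> \<beta> R)
                = graph_on X \<alpha> O graph_on X bd O compl_E E R O graph_on X bd \<and>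
              (mneg X le E \<alpha> ^^ (2 * n)) (prime_op X E \<alpha> \<beta> R)
                = graph_on X \<alpha> O graph_on X bu O compl_E E R O graph_on X bu"
    if R: "R \<in> Up le E" for R
  proof
    have "(tneg X le E \<alpha> ^^ (2 * n)) (prime_op X E \<alpha> \<beta> R) = conj (ai ^^ n) (prime_op X E \<alpha> \<beta> R)"
      using tneg_pow prime_Up R by blast
    also have "\<dots> = {(x, y). x \<in> X \<and> y \<in> X \<and> (bd (\<alpha> x), bd y) \<in> E - R}"
      unfolding bd_def by (rule final_eq) (auto simp: pai_in paiE pai_comm)
    also have "\<dots> = graph_on X \<alpha> O graph_on X bd O compl_E E R O graph_on X bd"
      using graph_form[OF bd1 bd2] by simp
    finally show "(tneg X le E \<alpha> ^^ (2 * n)) (prime_op X E \<alpha> \<beta> R)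
                = graph_on X \<alpha> O graph_on X bd O compl_E E R O graph_on X bd" .
    have "(mneg X le E \<alpha> ^^ (2 * n)) (prime_op X E \<alpha> \<beta> R) = conj (\<alpha> ^^ n) (prime_op X E \<alpha> \<beta> R)"
      using mneg_pow prime_Up R by blast
    also have "\<dots> = {(x, y). x \<in> X \<and> y \<in> X \<and> (bu (\<alpha> x), bu y) \<in> E - R}"
      unfolding bu_def by (rule final_eq) (auto simp: pa_in paE pa_comm)
    also have "\<dots> = graph_on X \<alpha> O graph_on X bu O compl_E E R O graph_on X bu"
      using graph_form[OF bu1 bu2] by simp
    finally show "(mneg X le E \<alpha> ^^ (2 * n)) (prime_op X E \<alpha> \<beta> R)
                = graph_on X \<alpha> O graph_on X bu O compl_E E R O graph_on X bu" .
  qed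
  show ?thesis
    apply (rule exI[of _ bd], rule exI[of _ bu])
    using gd gu main by blast
qed

end
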